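(* Let $\Lambda$ be a finite $k$-graph with no sources and let $\{t_\lambda\}_{\lambda\in\Lambda}$ be a purely atomic representation of $C^*(\Lambda)$ on a separable Hilbert space $\mathcal H$ with $t_\lambda t_\lambda^*\neq0$ for all $\lambda\in\Lambda$. Then the representation is monic if and only if $P(\{x\})$ is a rank-one projection for every atom $x$ of the associated projection-valued measure $P$. Moreover, in this case the measure $\mu_\pi$ associated to the monic representation is purely atomic.
   Context: $k$-graph: countable small category with degree $d:\Lambda\to\mathbb N^k$ with unique factorization; finite, no sources. $\Lambda^\infty$: infinite paths with cylinder sets $Z(\lambda)$ and Borel $\sigma$-algebra. The projection-valued measure $P$ of a representation $\{t_\lambda\}$ of $C^*(\Lambda)$ is the one with $P(Z(\lambda))=t_\lambda t_\lambda^*$; its atoms are the points $x$ with $P(\{x\})\ne0$. Purely atomic: there is Borel $\Omega$ with $P(\Lambda^\infty\setminus\Omega)=0$, $P(\{\omega\})\ne0$ for $\omega\in\Omega$, and $\bigoplus_{\omega\in\Omega}P(\{\omega\})=\mathrm{Id}$ strongly. Monic: $t_\lambda\neq 0$ for all $\lambda$ and there is $\xi$ with $\overline{\operatorname{span}}\{t_\lambda t_\lambda^*\xi\}=\mathcal H$; then $\mu_\pi$ is the Borel measure with $\mu_\pi(Z(\lambda))=\langle\xi,t_\lambda t_\lambda^*\xi\rangle$. *)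

theory Defs
  imports "HOL-Analysis.Analysis"
begin

text \<open>HOL-Analysis only provides real inner product spaces, so we introduce complex
inner product spaces as a type class. The inner product is conjugate-linear in the
first and linear in the second argument.\<close>

class complex_inner = real_normed_vector +
  fixes cscale :: "complex \<Rightarrow> 'a \<Rightarrow> 'a"
    and cinner :: "'a \<Rightarrow> 'a \<Rightarrow> complex"
  assumes scaleR_cscale: "scaleR r x = cscale (complex_of_real r) x"
    and cscale_add_right: "cscale a (x + y) = cscale a x + cscale a y"
    and cscale_add_left: "cscale (a + b) x = cscale a x + cscale b x"
    and cscale_cscale: "cscale a (cscale b x) = cscale (a * b) x"
    and cscale_one: "cscale 1 x = x"
    and cinner_commute: "cinner x y = cnj (cinner y x)"
    and cinner_add_left: "cinner (x + y) z = cinner x z + cinner y z"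
    and cinner_cscale_left: "cinner (cscale a x) y = cnj a * cinner x y"
    and cinner_self_nonneg: "0 \<le> Re (cinner x x)"
    and cinner_self_eq_zero: "cinner x x = 0 \<longleftrightarrow> x = 0"
    and norm_eq_sqrt_cinner: "norm x = sqrt (Re (cinner x x))"

class chilbert_space = complex_inner + complete_space

definition separable_type :: "'h::metric_space itself \<Rightarrow> bool" where
  "separable_type _ \<longleftrightarrow> (\<exists>D::'h set. countable D \<and> closure D = UNIV)"

definition cspan :: "'h::complex_inner set \<Rightarrow> 'h set" where
  "cspan S = {\<Sum>x\<in>F. cscale (c x) x | F c. finite F \<and> F \<subseteq> S}"

definition clinear :: "('h::complex_inner \<Rightarrow> 'h) \<Rightarrow> bool" where
  "clinear T \<longleftrightarrow> (\<forall>x y. T (x + y) = T x + T y) \<and> (\<forall>c x. T (cscale c x) = cscale c (T x))"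

definition bounded_clinear :: "('h::complex_inner \<Rightarrow> 'h) \<Rightarrow> bool" where
  "bounded_clinear T \<longleftrightarrow> clinear T \<and> (\<exists>K. \<forall>x. norm (T x) \<le> norm x * K)"

definition adj :: "('h::complex_inner \<Rightarrow> 'h) \<Rightarrow> ('h \<Rightarrow> 'h)" where
  "adj T = (SOME S. \<forall>x y. cinner (S x) y = cinner x (T y))"

definition is_projection :: "('h::complex_inner \<Rightarrow> 'h) \<Rightarrow> bool" where
  "is_projection P \<longleftrightarrow> bounded_clinear P \<and> P \<circ> P = P \<and> adj P = P"

definition rank_one :: "('h::complex_inner \<Rightarrow> 'h) \<Rightarrow> bool" where
  "rank_one P \<longleftrightarrow> (\<exists>v. v \<noteq> 0 \<and> range P = range (\<lambda>c. cscale c v))"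

text \<open>A k-graph: a countable small category (given by its set of morphisms, source,
range and composition; objects are identified with identity morphisms) together
with a degree functor into \<open>\<nat>^k\<close> (modelled as \<open>'k \<Rightarrow> nat\<close> for a finite type
\<open>'k\<close> with \<open>CARD('k) = k\<close>) satisfying the unique factorisation property.
\<open>comp \<lambda> \<mu>\<close> is the composite \<open>\<lambda>\<mu>\<close>, defined when \<open>s \<lambda> = r \<mu>\<close>.\<close>

record ('a, 'k) kgraph =
  mor :: "'a set"
  src :: "'a \<Rightarrow> 'a"
  rng :: "'a \<Rightarrow> 'a"
  comp :: "'a \<Rightarrow> 'a \<Rightarrow> 'a"
  deg :: "'a \<Rightarrow> 'k \<Rightarrow> nat"

definition is_kgraph :: "('a, 'k::finite) kgraph \<Rightarrow> bool" where
  "is_kgraph G \<longleftrightarrow>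
     countable (mor G) \<and>
     (\<forall>l\<in>mor G. src G l \<in> mor G \<and> rng G l \<in> mor G) \<and>
     (\<forall>l\<in>mor G. src G (src G l) = src G l \<and> rng G (src G l) = src G l \<and>
                 src G (rng G l) = rng G l \<and> rng G (rng G l) = rng G l) \<and>
     (\<forall>l\<in>mor G. \<forall>m\<in>mor G. src G l = rng G m \<longrightarrow>
         comp G l m \<in> mor G \<and> src G (comp G l m) = src G m \<and> rng G (comp G l m) = rng G l) \<and>
     (\<forall>l\<in>mor G. comp G (rng G l) l = l \<and> comp G l (src G l) = l) \<and>
     (\<forall>l\<in>mor G. \<forall>m\<in>mor G. \<forall>n\<in>mor G. src G l = rng G m \<longrightarrow> src G m = rng G n \<longrightarrow>
         comp G (comp G l m) n = comp G l (comp G m n)) \<and>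
     (\<forall>l\<in>mor G. \<forall>m\<in>mor G. src G l = rng G m \<longrightarrow>
         deg G (comp G l m) = (\<lambda>i. deg G l i + deg G m i)) \<and>
     (\<forall>l\<in>mor G. \<forall>p q. deg G l = (\<lambda>i. p i + q i) \<longrightarrow>
         (\<exists>!(m, n). m \<in> mor G \<and> n \<in> mor G \<and> src G m = rng G n \<and>
                    deg G m = p \<and> deg G n = q \<and> comp G m n = l))"

definition vertices :: "('a, 'k) kgraph \<Rightarrow> 'a set" where
  "vertices G = {v \<in> mor G. deg G v = (\<lambda>_. 0)}"

definition finite_kgraph :: "('a, 'k) kgraph \<Rightarrow> bool" where
  "finite_kgraph G \<longleftrightarrow> (\<forall>n. finite {l \<in> mor G. deg G l = n})"

definition no_sources :: "('a, 'k) kgraph \<Rightarrow> bool" where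
  "no_sources G \<longleftrightarrow> (\<forall>v\<in>vertices G. \<forall>n. \<exists>l\<in>mor G. rng G l = v \<and> deg G l = n)"

text \<open>Infinite paths: degree-preserving functors \<open>x : \<Omega>_k \<rightarrow> \<Lambda>\<close>, where \<open>\<Omega>_k\<close> has
morphisms \<open>(m,n)\<close>, \<open>m \<le> n\<close>; \<open>x m n\<close> is the image of \<open>(m,n)\<close> (and \<open>undefined\<close> off
the domain, to make the representation unique).\<close>
definition inf_paths :: "('a, 'k) kgraph \<Rightarrow> (('k \<Rightarrow> nat) \<Rightarrow> ('k \<Rightarrow> nat) \<Rightarrow> 'a) set" where
  "inf_paths G = {x.
     (\<forall>m n. m \<le> n \<longrightarrow> x m n \<in> mor G \<and> deg G (x m n) = (\<lambda>i. n i - m i)) \<and>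
     (\<forall>m n p. m \<le> n \<longrightarrow> n \<le> p \<longrightarrow>
        src G (x m n) = rng G (x n p) \<and> comp G (x m n) (x n p) = x m p) \<and>
     (\<forall>m n. \<not> m \<le> n \<longrightarrow> x m n = undefined)}"

definition cyl :: "('a, 'k) kgraph \<Rightarrow> 'a \<Rightarrow> (('k \<Rightarrow> nat) \<Rightarrow> ('k \<Rightarrow> nat) \<Rightarrow> 'a) set" where
  "cyl G l = {x \<in> inf_paths G. x (\<lambda>_. 0) (deg G l) = l}"

text \<open>Borel structure on \<open>\<Lambda>^\<infinity>\<close>: the cylinder sets form a countable basis of the
topology, so the Borel sigma-algebra is the one generated by the cylinder sets.\<close>
definition path_space :: "('a, 'k) kgraph \<Rightarrow> (('k \<Rightarrow> nat) \<Rightarrow> ('k \<Rightarrow> nat) \<Rightarrow> 'a) measure" where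
  "path_space G = sigma (inf_paths G) (cyl G ` mor G)"

text \<open>A representation of \<open>C*(\<Lambda>)\<close> is (by the universal property) a Cuntz-Krieger
\<open>\<Lambda>\<close>-family of bounded operators.\<close>
definition ck_family :: "('a, 'k) kgraph \<Rightarrow> ('a \<Rightarrow> 'h::complex_inner \<Rightarrow> 'h) \<Rightarrow> bool" where
  "ck_family G t \<longleftrightarrow>
     (\<forall>l\<in>mor G. bounded_clinear (t l)) \<and>
     (\<forall>v\<in>vertices G. is_projection (t v)) \<and>
     (\<forall>v\<in>vertices G. \<forall>w\<in>vertices G. v \<noteq> w \<longrightarrow> t v \<circ> t w = (\<lambda>_. 0)) \<and>
     (\<forall>l\<in>mor G. \<forall>m\<in>mor G. src G l = rng G m \<longrightarrow> t (comp G l m) = t l \<circ> t m) \<and>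
     (\<forall>l\<in>mor G. adj (t l) \<circ> t l = t (src G l)) \<and>
     (\<forall>v\<in>vertices G. \<forall>n. t v =
        (\<lambda>h. \<Sum>l\<in>{l \<in> mor G. rng G l = v \<and> deg G l = n}. t l (adj (t l) h)))"

definition pvm :: "'p measure \<Rightarrow> ('p set \<Rightarrow> 'h::complex_inner \<Rightarrow> 'h) \<Rightarrow> bool" where
  "pvm M P \<longleftrightarrow>
     (\<forall>E\<in>sets M. is_projection (P E)) \<and>
     P (space M) = id \<and>
     (\<forall>A::nat \<Rightarrow> 'p set. range A \<subseteq> sets M \<longrightarrow> disjoint_family A \<longrightarrow>
        (\<forall>h. (\<lambda>i. P (A i) h) sums P (\<Union>i. A i) h))"

definition pvm_of_rep :: "('a, 'k) kgraph \<Rightarrow> ('a \<Rightarrow> 'h::complex_inner \<Rightarrow> 'h)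
    \<Rightarrow> ((('k \<Rightarrow> nat) \<Rightarrow> ('k \<Rightarrow> nat) \<Rightarrow> 'a) set \<Rightarrow> 'h \<Rightarrow> 'h) \<Rightarrow> bool" where
  "pvm_of_rep G t P \<longleftrightarrow> pvm (path_space G) P \<and>
     (\<forall>l\<in>mor G. P (cyl G l) = t l \<circ> adj (t l))"

definition is_atom :: "'p measure \<Rightarrow> ('p set \<Rightarrow> 'h::complex_inner \<Rightarrow> 'h) \<Rightarrow> 'p \<Rightarrow> bool" where
  "is_atom M P x \<longleftrightarrow> x \<in> space M \<and> {x} \<in> sets M \<and> P {x} \<noteq> (\<lambda>_. 0)"

definition purely_atomic_pvm :: "'p measure \<Rightarrow> ('p set \<Rightarrow> 'h::complex_inner \<Rightarrow> 'h) \<Rightarrow> bool" where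
  "purely_atomic_pvm M P \<longleftrightarrow>
     (\<exists>\<Omega>\<in>sets M. P (space M - \<Omega>) = (\<lambda>_. 0) \<and>
        (\<forall>\<omega>\<in>\<Omega>. {\<omega>} \<in> sets M \<and> P {\<omega>} \<noteq> (\<lambda>_. 0)) \<and>
        (\<forall>h. ((\<lambda>\<omega>. P {\<omega>} h) has_sum h) \<Omega>))"

definition cyclic_vector :: "('a, 'k) kgraph \<Rightarrow> ('a \<Rightarrow> 'h::complex_inner \<Rightarrow> 'h) \<Rightarrow> 'h \<Rightarrow> bool" where
  "cyclic_vector G t \<xi> \<longleftrightarrow>
     closure (cspan {t l (adj (t l) \<xi>) | l. l \<in> mor G}) = UNIV"

definition monic :: "('a, 'k) kgraph \<Rightarrow> ('a \<Rightarrow> 'h::complex_inner \<Rightarrow> 'h) \<Rightarrow> bool" where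
  "monic G t \<longleftrightarrow> (\<forall>l\<in>mor G. t l \<noteq> (\<lambda>_. 0)) \<and> (\<exists>\<xi>. cyclic_vector G t \<xi>)"

definition is_mu_pi :: "('a, 'k) kgraph \<Rightarrow> ('a \<Rightarrow> 'h::complex_inner \<Rightarrow> 'h) \<Rightarrow> 'h
    \<Rightarrow> (('k \<Rightarrow> nat) \<Rightarrow> ('k \<Rightarrow> nat) \<Rightarrow> 'a) measure \<Rightarrow> bool" where
  "is_mu_pi G t \<xi> \<mu> \<longleftrightarrow> sets \<mu> = sets (path_space G) \<and>
     (\<forall>l\<in>mor G. emeasure \<mu> (cyl G l) = ennreal (Re (cinner \<xi> (t l (adj (t l) \<xi>)))))"

definition purely_atomic_measure :: "'p measure \<Rightarrow> bool" where
  "purely_atomic_measure \<mu> \<longleftrightarrow>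
     (\<exists>\<Omega>\<in>sets \<mu>. emeasure \<mu> (space \<mu> - \<Omega>) = 0 \<and>
        (\<forall>\<omega>\<in>\<Omega>. {\<omega>} \<in> sets \<mu> \<and> emeasure \<mu> {\<omega>} \<noteq> 0))"

end

theory Submission
  imports Defs
begin

context chilbert_space begin
subclass banach ..
end

lemma cscale_zero_left[simp]: "cscale 0 (x::'a::complex_inner) = 0"
proof -
  have "cscale 0 x = cscale 0 x + cscale 0 x" using cscale_add_left[of 0 0 x] by simp
  thus ?thesis by simp
qed

lemma cscale_zero_right[simp]: "cscale c (0::'a::complex_inner) = 0"
proof -
  have "cscale c (0::'a) = cscale c 0 + cscale c 0" using cscale_add_right[of c 0 0] by simp
  thus ?thesis by simp
qed

lemma cscale_minus_one: "cscale (-1) (x::'a::complex_inner) = - x"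
proof -
  have "x + cscale (-1) x = 0" using cscale_add_left[of 1 "-1" x] by (simp add: cscale_one)
  thus ?thesis by (simp add: eq_neg_iff_add_eq_0 add.commute)
qed

lemma cscale_minus_right: "cscale c (- (x::'a::complex_inner)) = - cscale c x"
proof -
  have "cscale c (- x) = cscale c (cscale (-1) x)" by (simp add: cscale_minus_one)
  also have "\<dots> = cscale (-1) (cscale c x)" by (simp add: cscale_cscale)
  finally show ?thesis by (simp add: cscale_minus_one)
qed

lemma cscale_diff_right: "cscale c ((x::'a::complex_inner) - y) = cscale c x - cscale c y"
  using cscale_add_right[of c x "-y"] by (simp add: cscale_minus_right)

lemma cscale_sum: "cscale c (sum f A) = (\<Sum>a\<in>A. cscale c (f a :: 'a::complex_inner))"
  by (induction A rule: infinite_finite_induct) (auto simp: cscale_add_right)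

lemma cinner_add_right: "cinner (x::'a::complex_inner) (y + z) = cinner x y + cinner x z"
  by (subst (1 2 3) cinner_commute) (simp add: cinner_add_left)

lemma cinner_cscale_right: "cinner (x::'a::complex_inner) (cscale a y) = a * cinner x y"
  by (subst (1 2) cinner_commute) (simp add: cinner_cscale_left)

lemma cinner_zero_left[simp]: "cinner (0::'a::complex_inner) y = 0"
  using cinner_add_left[of "0::'a" 0 y] by simp

lemma cinner_zero_right[simp]: "cinner (x::'a::complex_inner) 0 = 0"
  using cinner_add_right[of x 0 0] by simp

lemma cinner_minus_left: "cinner (- (x::'a::complex_inner)) y = - cinner x y"
  using cinner_add_left[of x "-x" y] by (simp add: eq_neg_iff_add_eq_0 add.commute)

lemma cinner_minus_right: "cinner (x::'a::complex_inner) (- y) = - cinner x y"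
  using cinner_add_right[of x y "-y"] by (simp add: eq_neg_iff_add_eq_0 add.commute)

lemma cinner_diff_left: "cinner ((x::'a::complex_inner) - y) z = cinner x z - cinner y z"
  using cinner_add_left[of x "-y" z] by (simp add: cinner_minus_left)

lemma cinner_diff_right: "cinner (x::'a::complex_inner) (y - z) = cinner x y - cinner x z"
  using cinner_add_right[of x y "-z"] by (simp add: cinner_minus_right)

lemma cinner_sum_right: "cinner (x::'a::complex_inner) (sum f A) = (\<Sum>a\<in>A. cinner x (f a))"
  by (induction A rule: infinite_finite_induct) (auto simp: cinner_add_right)

lemma cinner_scaleR_left: "cinner (scaleR r (x::'a::complex_inner)) y = of_real r * cinner x y"
  by (simp add: scaleR_cscale cinner_cscale_left)

lemma cinner_scaleR_right: "cinner (x::'a::complex_inner) (scaleR r y) = of_real r * cinner x y"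
  by (simp add: scaleR_cscale cinner_cscale_right)

lemma cinner_self_real: "cinner (x::'a::complex_inner) x = of_real ((norm x)\<^sup>2)"
proof -
  have c: "cnj (cinner x x) = cinner x x" by (rule sym[OF cinner_commute])
  have "Im (cinner x x) = 0" using arg_cong[OF c, of Im] by simp
  moreover have "Re (cinner x x) = (norm x)\<^sup>2"
    using norm_eq_sqrt_cinner[of x] cinner_self_nonneg[of x] by simp
  ultimately show ?thesis by (simp add: complex_eq_iff)
qed

lemma norm_sq_cinner: "(norm (x::'a::complex_inner))\<^sup>2 = Re (cinner x x)"
  by (simp add: cinner_self_real)

lemma norm_add_sq: "(norm ((x::'a::complex_inner) + y))\<^sup>2 = (norm x)\<^sup>2 + 2 * Re (cinner x y) + (norm y)\<^sup>2"
proof -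
  have "cinner (x+y) (x+y) = cinner x x + cinner x y + cinner y x + cinner y y"
    by (simp add: cinner_add_left cinner_add_right)
  moreover have "Re (cinner y x) = Re (cinner x y)" using cinner_commute[of y x] by simp
  ultimately show ?thesis by (simp add: norm_sq_cinner)
qed

lemma norm_diff_sq: "(norm ((x::'a::complex_inner) - y))\<^sup>2 = (norm x)\<^sup>2 - 2 * Re (cinner x y) + (norm y)\<^sup>2"
  using norm_add_sq[of x "-y"] by (simp add: cinner_minus_right)

lemma norm_cscale: "norm (cscale c (x::'a::complex_inner)) = cmod c * norm x"
proof -
  have "(norm (cscale c x))\<^sup>2 = Re ((cnj c * c) * cinner x x)"
    by (simp only: norm_sq_cinner cinner_cscale_left cinner_cscale_right ac_simps)
  also have "cnj c * c = of_real ((cmod c)\<^sup>2)" by (subst mult.commute) (rule complex_norm_square[symmetric])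
  also have "Re (of_real ((cmod c)\<^sup>2) * cinner x x) = (cmod c * norm x)\<^sup>2"
    by (simp add: cinner_self_real power_mult_distrib del: of_real_power)
  finally show ?thesis by (simp add: power2_eq_iff_nonneg)
qed

lemma cauchy_schwarz: "cmod (cinner (x::'a::complex_inner) y) \<le> norm x * norm y"
proof (cases "x = 0")
  case True thus ?thesis by simp
next
  case False
  define c where "c = cinner x y / cinner x x"
  define z where "z = y - cscale c x"
  have xx: "cinner x x = of_real ((norm x)\<^sup>2)" by (rule cinner_self_real)
  have nx: "norm x > 0" using False by simp
  have xz: "cinner x z = 0"
    using nx by (simp add: z_def c_def cinner_diff_right cinner_cscale_right xx)
  have "y = z + cscale c x" by (simp add: z_def)
  hence "(norm y)\<^sup>2 = (norm z)\<^sup>2 + 2 * Re (cinner z (cscale c x)) + (norm (cscale c x))\<^sup>2"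
    using norm_add_sq[of z "cscale c x"] by simp
  moreover have "cinner z (cscale c x) = 0"
    using xz cinner_commute[of z x] by (simp add: cinner_cscale_right)
  ultimately have "(norm y)\<^sup>2 \<ge> (cmod c * norm x)\<^sup>2" by (simp add: norm_cscale)
  hence "norm y \<ge> cmod c * norm x" by (rule power2_le_imp_le) simp
  moreover have "cmod c = cmod (cinner x y) / (norm x)\<^sup>2"
    by (simp add: c_def xx norm_divide del: of_real_power)
  hence "cmod c * norm x = cmod (cinner x y) / norm x"
    using nx by (simp add: power2_eq_square)
  ultimately have "cmod (cinner x y) / norm x \<le> norm y" by simp
  thus ?thesis using nx by (simp add: divide_le_eq mult.commute)
qed

lemma bclin_linear: "bounded_clinear T \<Longrightarrow> bounded_linear T"
  unfolding bounded_clinear_def clinear_def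
  by (auto intro!: bounded_linear_intro simp: scaleR_cscale)

lemma bclin_add: "bounded_clinear T \<Longrightarrow> T (x + y) = T x + T y"
  unfolding bounded_clinear_def clinear_def by auto

lemma bclin_cscale: "bounded_clinear T \<Longrightarrow> T (cscale c x) = cscale c (T x)"
  unfolding bounded_clinear_def clinear_def by auto

lemma bclin_zero: "bounded_clinear T \<Longrightarrow> T 0 = 0"
  using bclin_linear linear_simps(3) bounded_linear.linear by blast

lemma bclin_diff: "bounded_clinear T \<Longrightarrow> T (x - y) = T x - T y"
  using bclin_add[of T "x - y" y] by (simp add: eq_diff_eq)

lemma bclin_sum: "bounded_clinear T \<Longrightarrow> T (sum f A) = (\<Sum>a\<in>A. T (f a))"
  by (induction A rule: infinite_finite_induct) (auto simp: bclin_add bclin_zero)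

lemma riesz:
  fixes f :: "'a::chilbert_space \<Rightarrow> complex"
  assumes add: "\<And>x y. f (x + y) = f x + f y" and sc: "\<And>c x. f (cscale c x) = c * f x"
    and bd: "\<And>x. cmod (f x) \<le> K * norm x"
  shows "\<exists>u. \<forall>y. f y = cinner u y"
proof (cases "\<forall>y. f y = 0")
  case True then show ?thesis by (intro exI[of _ 0]) simp
next
  case False
  have f0: "f 0 = 0" using sc[of 0 0] by simp
  have fsR: "f (scaleR r x) = of_real r * f x" for r x by (simp add: scaleR_cscale sc)
  have blf: "bounded_linear f"
    by (rule bounded_linear_intro[of _ K]) (auto simp: add fsR bd mult.commute scaleR_conv_of_real)
  from False obtain w where fw: "f w \<noteq> 0" by blast
  define H where "H = {y. f y = 1}"
  have w0: "cscale (1 / f w) w \<in> H" using fw by (simp add: H_def sc)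
  define N where "N = (\<lambda>y::'a. (norm y)\<^sup>2) ` H"
  define d where "d = Inf N"
  have Nne: "N \<noteq> {}" using w0 by (auto simp: N_def)
  have bdd: "bdd_below N" by (intro bdd_belowI[of _ 0]) (auto simp: N_def)
  have dle: "d \<le> (norm y)\<^sup>2" if "y \<in> H" for y
    unfolding d_def by (rule cInf_lower) (use that bdd in \<open>auto simp: N_def\<close>)
  have "\<exists>y\<in>H. (norm y)\<^sup>2 < d + 1 / Suc n" for n
  proof -
    have "Inf N < d + 1 / Suc n" by (simp add: d_def)
    from cInf_lessD[OF Nne this] show ?thesis by (auto simp: N_def)
  qed
  then obtain Y where YH: "\<And>n. Y n \<in> H" and Yn: "\<And>n. (norm (Y n))\<^sup>2 < d + 1 / Suc n" by metis
  have para: "(norm (a - b))\<^sup>2 = 2 * (norm a)\<^sup>2 + 2 * (norm b)\<^sup>2 - (norm (a + b))\<^sup>2" for a b :: 'a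
    using norm_add_sq[of a b] norm_diff_sq[of a b] by simp
  have mid: "(norm (a + b))\<^sup>2 \<ge> 4 * d" if "a \<in> H" "b \<in> H" for a b
  proof -
    have "scaleR (1/2) (a + b) \<in> H" using that by (simp add: H_def fsR add)
    hence "d \<le> (norm (scaleR (1/2) (a + b)))\<^sup>2" by (rule dle)
    also have "\<dots> = (norm (a + b))\<^sup>2 / 4" by (simp add: power2_eq_square)
    finally show ?thesis by simp
  qed
  have Ydist: "(norm (Y m - Y n))\<^sup>2 \<le> 2 / Suc m + 2 / Suc n" for m n
    using para[of "Y m" "Y n"] mid[OF YH YH, of m n] Yn[of m] Yn[of n] by simp
  have "Cauchy Y"
  proof (rule metric_CauchyI)
    fix e :: real assume e: "e > 0"
    obtain M :: nat where M: "4 / e\<^sup>2 < M" using reals_Archimedean2 by blast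
    have "4 / Suc M < e\<^sup>2"
    proof -
      have "4 / e\<^sup>2 < Suc M" using M by simp
      thus ?thesis using e by (simp add: field_simps)
    qed
    show "\<exists>M. \<forall>m\<ge>M. \<forall>n\<ge>M. dist (Y m) (Y n) < e"
    proof (intro exI allI impI)
      fix m n assume mn: "m \<ge> M" "n \<ge> M"
      have "2 / real (Suc m) \<le> 2 / Suc M" "2 / real (Suc n) \<le> 2 / Suc M"
        using mn by (auto intro!: divide_left_mono)
      hence "(norm (Y m - Y n))\<^sup>2 < e\<^sup>2" using Ydist[of m n] \<open>4 / Suc M < e\<^sup>2\<close> by linarith
      thus "dist (Y m) (Y n) < e" using e by (simp add: dist_norm power_less_imp_less_base)
    qed
  qed
  then obtain z where Yz: "Y \<longlonglongrightarrow> z" using Cauchy_convergent_iff convergent_def by blast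
  have lim: "(\<lambda>n. f (Y n)) \<longlonglongrightarrow> f z" using bounded_linear.tendsto[OF blf Yz] .
  have eq1: "(\<lambda>n. f (Y n)) = (\<lambda>n. 1)" using YH by (auto simp: H_def)
  have "(\<lambda>n. 1::complex) \<longlonglongrightarrow> f z" using lim unfolding eq1 .
  hence fz: "f z = 1" by (simp add: LIMSEQ_const_iff)
  have "(\<lambda>n. (norm (Y n))\<^sup>2) \<longlonglongrightarrow> (norm z)\<^sup>2" by (intro tendsto_intros Yz)
  moreover have "(\<lambda>n. d + 1 / Suc n) \<longlonglongrightarrow> d"
    using tendsto_add[OF tendsto_const LIMSEQ_inverse_real_of_nat, of d] by (simp add: inverse_eq_divide)
  ultimately have zd: "(norm z)\<^sup>2 \<le> d" using Yn by (intro LIMSEQ_le[of _ _ "\<lambda>n. d + 1 / Suc n"]) (auto intro: less_imp_le)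
  have orth: "cinner z v = 0" if fv: "f v = 0" for v
  proof -
    define a where "a = cinner z v"
    define s :: real where "s = 1 / ((norm v)\<^sup>2 + 1)"
    have pos: "(norm v)\<^sup>2 + 1 > 0" using zero_le_power2[of "norm v"] by linarith
    have s0: "s > 0" using pos by (simp add: s_def)
    have s1: "s * (norm v)\<^sup>2 < 1" using pos by (simp add: s_def field_simps)
    define t where "t = - (of_real s * cnj a)"
    have zt: "z + cscale t v \<in> H" using fz fv by (simp add: H_def add sc)
    have "(norm z)\<^sup>2 \<le> (norm (z + cscale t v))\<^sup>2" using dle[OF zt] zd by linarith
    also have "\<dots> = (norm z)\<^sup>2 + 2 * Re (t * a) + (cmod t * norm v)\<^sup>2"
      by (simp add: norm_add_sq cinner_cscale_right norm_cscale a_def)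
    also have "Re (t * a) = - s * (cmod a)\<^sup>2"
    proof -
      have ca: "cnj a * a = of_real ((cmod a)\<^sup>2)"
        by (subst mult.commute) (rule complex_norm_square[symmetric])
      have "t * a = - (of_real s * (cnj a * a))" by (simp add: t_def mult.assoc)
      also have "\<dots> = - of_real (s * (cmod a)\<^sup>2)" by (simp only: ca of_real_mult)
      finally show ?thesis by simp
    qed
    also have "cmod t = s * cmod a" using s0 by (simp add: t_def norm_mult)
    finally have "0 \<le> - 2 * s * (cmod a)\<^sup>2 + s\<^sup>2 * (cmod a)\<^sup>2 * (norm v)\<^sup>2"
      by (simp add: power_mult_distrib)
    hence h: "0 \<le> s * ((cmod a)\<^sup>2 * (s * (norm v)\<^sup>2 - 2))" by (simp add: algebra_simps power2_eq_square)
    have h2: "0 \<le> (cmod a)\<^sup>2 * (s * (norm v)\<^sup>2 - 2)"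
    proof (rule ccontr)
      assume "\<not> ?thesis"
      hence "s * ((cmod a)\<^sup>2 * (s * (norm v)\<^sup>2 - 2)) < 0" using s0 by (simp add: mult_pos_neg)
      thus False using h by linarith
    qed
    have Yn: "s * (norm v)\<^sup>2 - 2 < 0" using s1 by simp
    have "(cmod a)\<^sup>2 \<le> 0"
    proof (rule ccontr)
      assume "\<not> ?thesis"
      hence "(cmod a)\<^sup>2 * (s * (norm v)\<^sup>2 - 2) < 0" using Yn by (simp add: mult_pos_neg)
      thus False using h2 by linarith
    qed
    thus ?thesis by (simp add: a_def)
  qed
  have z0: "z \<noteq> 0" using fz f0 by auto
  hence nz: "(norm z)\<^sup>2 > 0" by simp
  define u where "u = cscale (1 / of_real ((norm z)\<^sup>2)) z"
  show ?thesis
  proof (intro exI allI)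
    fix y
    have "f (y - cscale (f y) z) = 0"
      using add[of "y - cscale (f y) z" "cscale (f y) z"] by (simp add: sc fz)
    hence "cinner z (y - cscale (f y) z) = 0" by (rule orth)
    hence "cinner z y = f y * of_real ((norm z)\<^sup>2)"
      by (simp add: cinner_diff_right cinner_cscale_right cinner_self_real)
    thus "f y = cinner u y" using nz
      by (simp add: u_def cinner_cscale_left field_simps del: of_real_power)
  qed
qed

lemma adj_exists:
  fixes T :: "'a::chilbert_space \<Rightarrow> 'a"
  assumes "bounded_clinear T"
  shows "\<exists>S. \<forall>x y. cinner (S x) y = cinner x (T y)"
proof -
  from assms obtain K where K: "\<And>x. norm (T x) \<le> norm x * K"
    unfolding bounded_clinear_def by blast
  have "\<exists>u. \<forall>y. cinner x (T y) = cinner u y" for x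
  proof (rule riesz[where K = "norm x * K"])
    show "cinner x (T (a + b)) = cinner x (T a) + cinner x (T b)" for a b
      using assms by (simp add: bclin_add cinner_add_right)
    show "cinner x (T (cscale c a)) = c * cinner x (T a)" for c a
      using assms by (simp add: bclin_cscale cinner_cscale_right)
    show "cmod (cinner x (T a)) \<le> norm x * K * norm a" for a
      using cauchy_schwarz[of x "T a"] K[of a] mult_left_mono[of "norm (T a)" "norm a * K" "norm x"]
      by (simp add: mult.assoc mult.commute mult.left_commute)
  qed
  then obtain S where "\<And>x. \<forall>y. cinner x (T y) = cinner (S x) y" by metis
  thus ?thesis by metis
qed

lemma adj_spec:
  fixes T :: "'a::chilbert_space \<Rightarrow> 'a"
  assumes "bounded_clinear T"
  shows "cinner (adj T x) y = cinner x (T y)"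
proof -
  have "\<forall>x y. cinner (adj T x) y = cinner x (T y)"
    using someI_ex[OF adj_exists[OF assms]] unfolding adj_def .
  thus ?thesis by blast
qed

lemma proj_selfadj:
  fixes P :: "'a::chilbert_space \<Rightarrow> 'a"
  assumes "is_projection P"
  shows "cinner (P x) y = cinner x (P y)"
  using adj_spec[of P x y] assms unfolding is_projection_def by simp

lemma proj_idem: "is_projection P \<Longrightarrow> P (P x) = P x"
  unfolding is_projection_def by (metis comp_apply)

lemma proj_inner_self:
  fixes P :: "'a::chilbert_space \<Rightarrow> 'a"
  assumes "is_projection P"
  shows "cinner x (P x) = of_real ((norm (P x))\<^sup>2)"
proof -
  have "cinner x (P x) = cinner x (P (P x))" using proj_idem[OF assms] by simp
  also have "\<dots> = cinner (P x) (P x)" using proj_selfadj[OF assms] by simp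
  finally show ?thesis by (simp add: cinner_self_real)
qed

section \<open>Projection-valued measures\<close>

lemma pvm_proj: "pvm M P \<Longrightarrow> E \<in> sets M \<Longrightarrow> is_projection (P E)"
  unfolding pvm_def by blast

lemma pvm_bcl: "pvm M P \<Longrightarrow> E \<in> sets M \<Longrightarrow> bounded_clinear (P E)"
  using pvm_proj unfolding is_projection_def by blast

lemma pvm_idem: "pvm M P \<Longrightarrow> E \<in> sets M \<Longrightarrow> P E (P E h) = P E h"
  using pvm_proj proj_idem by blast

lemma pvm_sums: "pvm M P \<Longrightarrow> range A \<subseteq> sets M \<Longrightarrow> disjoint_family A \<Longrightarrow>
    (\<lambda>i. P (A i) h) sums P (\<Union>i. A i) h"
  unfolding pvm_def by blast

lemma pvm_space: "pvm M P \<Longrightarrow> P (space M) h = h"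
  unfolding pvm_def by simp

lemma pvm_empty:
  fixes P :: "'p set \<Rightarrow> 'h::complex_inner \<Rightarrow> 'h"
  assumes "pvm M P" shows "P {} h = 0"
proof -
  have "(\<lambda>i::nat. P {} h) sums P (\<Union>i::nat. {}) h"
    by (rule pvm_sums[OF assms]) (auto simp: disjoint_family_on_def)
  hence "summable (\<lambda>i::nat. P {} h)" by (rule sums_summable)
  hence "(\<lambda>i::nat. P {} h) \<longlonglongrightarrow> 0" by (rule summable_LIMSEQ_zero)
  thus ?thesis by (simp add: LIMSEQ_const_iff)
qed

lemma pvm_union:
  fixes P :: "'p set \<Rightarrow> 'h::complex_inner \<Rightarrow> 'h"
  assumes pv: "pvm M P" and AB: "A \<in> sets M" "B \<in> sets M" "A \<inter> B = {}"
  shows "P (A \<union> B) h = P A h + P B h"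
proof -
  define F where "F i = (if i = 0 then A else if i = Suc 0 then B else {})" for i :: nat
  have "range F \<subseteq> sets M" using AB by (auto simp: F_def)
  moreover have "disjoint_family F" using AB by (auto simp: disjoint_family_on_def F_def)
  ultimately have s1: "(\<lambda>i. P (F i) h) sums P (\<Union>i. F i) h" by (rule pvm_sums[OF pv])
  have U: "(\<Union>i. F i) = A \<union> B"
  proof
    show "(\<Union>i. F i) \<subseteq> A \<union> B" by (auto simp: F_def split: if_splits)
    show "A \<union> B \<subseteq> (\<Union>i. F i)"
    proof
      fix x assume "x \<in> A \<union> B"
      thus "x \<in> (\<Union>i. F i)"
      proof
        assume "x \<in> A" thus ?thesis by (intro UN_I[of 0]) (auto simp: F_def)
      next
        assume "x \<in> B" thus ?thesis by (intro UN_I[of "Suc 0"]) (auto simp: F_def)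
      qed
    qed
  qed
  have "(\<lambda>i. P (F i) h) sums (\<Sum>i\<in>{0, Suc 0}. P (F i) h)"
    by (rule sums_finite) (auto simp: F_def pvm_empty[OF pv])
  hence "(\<lambda>i. P (F i) h) sums (P A h + P B h)" by (simp add: F_def)
  with s1 U show ?thesis using sums_unique2 by metis
qed

lemma two_zero: "(a::'a::real_vector) + a = 0 \<Longrightarrow> a = 0"
proof -
  assume "a + a = 0"
  hence "scaleR 2 a = 0" by (simp add: scaleR_2)
  thus "a = 0" by simp
qed

lemma pvm_disj:
  fixes P :: "'p set \<Rightarrow> 'h::complex_inner \<Rightarrow> 'h"
  assumes pv: "pvm M P" and AB: "A \<in> sets M" "B \<in> sets M" "A \<inter> B = {}"
  shows "P A (P B h) = 0"
proof -
  let ?p = "P A" and ?q = "P B"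
  have AUB: "A \<union> B \<in> sets M" using AB by auto
  have r: "P (A \<union> B) x = ?p x + ?q x" for x by (rule pvm_union[OF pv AB])
  have lp: "bounded_clinear ?p" "bounded_clinear ?q" using pvm_bcl[OF pv] AB by auto
  have ip: "?p (?p x) = ?p x" "?q (?q x) = ?q x" for x using pvm_idem[OF pv] AB by auto
  have i: "?p (?q x) + ?q (?p x) = 0" for x
  proof -
    have "P (A \<union> B) (P (A \<union> B) x) = P (A \<union> B) x" by (rule pvm_idem[OF pv AUB])
    hence "?p x + ?p (?q x) + (?q (?p x) + ?q x) = ?p x + ?q x"
      by (simp add: r bclin_add[OF lp(1)] bclin_add[OF lp(2)] ip)
    thus ?thesis by (simp add: algebra_simps)
  qed
  have ii: "?p (?q h) + ?p (?q (?p h)) = 0"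
    using arg_cong[OF i[of h], of ?p] by (simp add: bclin_add[OF lp(1)] bclin_zero[OF lp(1)] ip)
  have iii: "?p (?q (?p h)) + ?q (?p h) = 0"
    using i[of "?p h"] by (simp add: ip)
  have "?p (?q h) = ?q (?p h)"
    using ii iii by (simp add: eq_neg_iff_add_eq_0[symmetric] add_eq_0_iff)
  hence "?p (?q h) + ?p (?q h) = 0" using i[of h] by simp
  thus ?thesis by (rule two_zero)
qed

lemma pvm_inter:
  fixes P :: "'p set \<Rightarrow> 'h::complex_inner \<Rightarrow> 'h"
  assumes pv: "pvm M P" and AB: "A \<in> sets M" "B \<in> sets M"
  shows "P A (P B h) = P (A \<inter> B) h"
proof -
  have S: "A \<inter> B \<in> sets M" "A - B \<in> sets M" "B - A \<in> sets M" using AB by auto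
  have d1: "A \<inter> B \<inter> (A - B) = {}" "A \<inter> B \<inter> (B - A) = {}" by blast+
  have u1: "A \<inter> B \<union> (A - B) = A" "A \<inter> B \<union> (B - A) = B" by blast+
  have eA: "P A y = P (A \<inter> B) y + P (A - B) y" for y
    using pvm_union[OF pv S(1) S(2) d1(1), of y] by (simp only: u1)
  have eB: "P B h = P (A \<inter> B) h + P (B - A) h"
    using pvm_union[OF pv S(1) S(3) d1(2), of h] by (simp only: u1)
  have l1: "bounded_clinear (P (A \<inter> B))" "bounded_clinear (P (A - B))" using pvm_bcl[OF pv] S by auto
  have z1: "P (A \<inter> B) (P (B - A) h) = 0" by (rule pvm_disj[OF pv S(1) S(3)]) auto
  have z2: "P (A - B) (P (A \<inter> B) h) = 0" by (rule pvm_disj[OF pv S(2) S(1)]) auto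
  have z3: "P (A - B) (P (B - A) h) = 0" by (rule pvm_disj[OF pv S(2) S(3)]) auto
  show ?thesis
    by (simp add: eA eB bclin_add[OF l1(1)] bclin_add[OF l1(2)] z1 z2 z3 pvm_idem[OF pv S(1)])
qed

lemma pvm_compl:
  fixes P :: "'p set \<Rightarrow> 'h::complex_inner \<Rightarrow> 'h"
  assumes pv: "pvm M P" and A: "A \<in> sets M"
  shows "P (space M - A) h = h - P A h"
proof -
  have "A \<union> (space M - A) = space M" using sets.sets_into_space[OF A] by auto
  hence "P (space M) h = P A h + P (space M - A) h"
    using pvm_union[OF pv A, of "space M - A"] A by auto
  thus ?thesis using pvm_space[OF pv] by (simp add: algebra_simps)
qed

lemma pvm_finite_union:
  fixes P :: "'p set \<Rightarrow> 'h::complex_inner \<Rightarrow> 'h"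
  assumes pv: "pvm M P" and fin: "finite I" and S: "\<And>i. i \<in> I \<Longrightarrow> S i \<in> sets M"
    and dj: "disjoint_family_on S I"
  shows "P (\<Union>i\<in>I. S i) h = (\<Sum>i\<in>I. P (S i) h)"
  using fin S dj
proof (induction I rule: finite_induct)
  case empty thus ?case by (simp add: pvm_empty[OF pv])
next
  case (insert i I)
  have dI: "disjoint_family_on S I" using insert.prems(2) by (auto simp: disjoint_family_on_def)
  have U: "(\<Union>j\<in>I. S j) \<in> sets M" using insert.prems(1) insert.hyps(1) by auto
  have "S i \<inter> (\<Union>j\<in>I. S j) = {}"
    using insert.prems(2) insert.hyps(2) by (auto simp: disjoint_family_on_def)
  hence "P (S i \<union> (\<Union>j\<in>I. S j)) h = P (S i) h + P (\<Union>j\<in>I. S j) h"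
    using pvm_union[OF pv _ U] insert.prems(1) by auto
  thus ?case using insert dI by simp
qed

section \<open>k-graph path combinatorics\<close>

abbreviation zk :: "'k \<Rightarrow> nat" where "zk \<equiv> (\<lambda>_. 0)"

lemma zk_le: "zk \<le> (n :: 'k \<Rightarrow> nat)" by (simp add: le_fun_def)

lemma path_deg: "x \<in> inf_paths G \<Longrightarrow> m \<le> n \<Longrightarrow> x m n \<in> mor G \<and> deg G (x m n) = (\<lambda>i. n i - m i)"
  unfolding inf_paths_def by blast

lemma path_comp: "x \<in> inf_paths G \<Longrightarrow> m \<le> n \<Longrightarrow> n \<le> p \<Longrightarrow>
    src G (x m n) = rng G (x n p) \<and> comp G (x m n) (x n p) = x m p"
  unfolding inf_paths_def by blast

lemma path_deg0: "x \<in> inf_paths G \<Longrightarrow> x zk n \<in> mor G \<and> deg G (x zk n) = n"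
  using path_deg[OF _ zk_le] by fastforce

lemma prefix_unique:
  assumes kg: "is_kgraph G" and x: "x \<in> inf_paths G" and y: "y \<in> inf_paths G"
    and nm: "n \<le> m" and eq: "x zk m = y zk m"
  shows "x zk n = y zk n"
proof -
  have uf: "\<forall>l\<in>mor G. \<forall>p q. deg G l = (\<lambda>i. p i + q i) \<longrightarrow>
         (\<exists>!(a, b). a \<in> mor G \<and> b \<in> mor G \<and> src G a = rng G b \<and>
                    deg G a = p \<and> deg G b = q \<and> comp G a b = l)"
    using kg unfolding is_kgraph_def by blast
  define l where "l = x zk m"
  have l: "l \<in> mor G" "deg G l = m" using path_deg0[OF x] by (auto simp: l_def)
  have "m = (\<lambda>i. n i + (m i - n i))" using nm by (auto simp: le_fun_def)
  hence dl: "deg G l = (\<lambda>i. n i + (m i - n i))" using l by simp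
  have "\<forall>p q. deg G l = (\<lambda>i. p i + q i) \<longrightarrow>
         (\<exists>!(a, b). a \<in> mor G \<and> b \<in> mor G \<and> src G a = rng G b \<and>
                    deg G a = p \<and> deg G b = q \<and> comp G a b = l)" using uf l(1) by blast
  from this[rule_format, of n "\<lambda>i. m i - n i"]
  have ex: "\<exists>!(a, b). a \<in> mor G \<and> b \<in> mor G \<and> src G a = rng G b \<and>
                    deg G a = n \<and> deg G b = (\<lambda>i. m i - n i) \<and> comp G a b = l"
    using dl by simp
  have px: "x zk n \<in> mor G \<and> x n m \<in> mor G \<and> src G (x zk n) = rng G (x n m) \<and>
       deg G (x zk n) = n \<and> deg G (x n m) = (\<lambda>i. m i - n i) \<and> comp G (x zk n) (x n m) = l"
    using path_deg0[OF x] path_deg[OF x nm] path_comp[OF x zk_le nm] by (simp add: l_def)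
  have py: "y zk n \<in> mor G \<and> y n m \<in> mor G \<and> src G (y zk n) = rng G (y n m) \<and>
       deg G (y zk n) = n \<and> deg G (y n m) = (\<lambda>i. m i - n i) \<and> comp G (y zk n) (y n m) = l"
    using path_deg0[OF y] path_deg[OF y nm] path_comp[OF y zk_le nm] by (simp add: l_def eq)
  from ex px py have "(x zk n, x n m) = (y zk n, y n m)" by (auto dest: ex1_implies_ex)
  thus ?thesis by simp
qed

definition cylD :: "('a, 'k) kgraph \<Rightarrow> (('k \<Rightarrow> nat) \<Rightarrow> ('k \<Rightarrow> nat) \<Rightarrow> 'a) set set" where
  "cylD G = {{x \<in> inf_paths G. x zk n \<in> F} | n F. F \<subseteq> {l \<in> mor G. deg G l = n}}"

lemma cylD_eq:
  assumes "F \<subseteq> {l \<in> mor G. deg G l = n}"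
  shows "{x \<in> inf_paths G. x zk n \<in> F} = (\<Union>v\<in>F. cyl G v)"
proof (intro equalityI subsetI)
  fix x assume x: "x \<in> {x \<in> inf_paths G. x zk n \<in> F}"
  hence "deg G (x zk n) = n" using assms by auto
  hence "x \<in> cyl G (x zk n)" using x by (auto simp: cyl_def)
  thus "x \<in> (\<Union>v\<in>F. cyl G v)" using x by blast
next
  fix x assume "x \<in> (\<Union>v\<in>F. cyl G v)"
  then obtain v where v: "v \<in> F" "x \<in> cyl G v" by blast
  hence "deg G v = n" using assms by auto
  thus "x \<in> {x \<in> inf_paths G. x zk n \<in> F}" using v by (auto simp: cyl_def)
qed

lemma cyl_disj:
  assumes "deg G v = deg G w" "v \<noteq> w"
  shows "cyl G v \<inter> cyl G w = {}"
  using assms unfolding cyl_def by auto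

lemma cylD_Int_stable:
  assumes kg: "is_kgraph G"
  shows "Int_stable (cylD G)"
proof (rule Int_stableI)
  fix a b assume "a \<in> cylD G" "b \<in> cylD G"
  then obtain n F n' F' where a: "a = {x \<in> inf_paths G. x zk n \<in> F}" and F: "F \<subseteq> {l \<in> mor G. deg G l = n}"
    and b: "b = {x \<in> inf_paths G. x zk n' \<in> F'}" and F': "F' \<subseteq> {l \<in> mor G. deg G l = n'}"
    unfolding cylD_def by blast
  define m where "m = (\<lambda>i. max (n i) (n' i))"
  have nm: "n \<le> m" "n' \<le> m" by (auto simp: m_def le_fun_def)
  define F'' where "F'' = {v \<in> mor G. deg G v = m \<and> (\<exists>y\<in>a \<inter> b. y zk m = v)}"
  have "a \<inter> b = {x \<in> inf_paths G. x zk m \<in> F''}"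
  proof
    show "a \<inter> b \<subseteq> {x \<in> inf_paths G. x zk m \<in> F''}"
      using path_deg0 by (auto simp: F''_def a b)
    show "{x \<in> inf_paths G. x zk m \<in> F''} \<subseteq> a \<inter> b"
    proof
      fix x assume "x \<in> {x \<in> inf_paths G. x zk m \<in> F''}"
      then obtain y where x: "x \<in> inf_paths G" and y: "y \<in> a \<inter> b" and e: "y zk m = x zk m"
        by (auto simp: F''_def)
      have yp: "y \<in> inf_paths G" using y by (auto simp: a)
      have "x zk n = y zk n" by (rule prefix_unique[OF kg x yp nm(1) e[symmetric]])
      moreover have "x zk n' = y zk n'" by (rule prefix_unique[OF kg x yp nm(2) e[symmetric]])
      ultimately show "x \<in> a \<inter> b" using x y by (auto simp: a b)
    qed
  qed
  moreover have "F'' \<subseteq> {l \<in> mor G. deg G l = m}" by (auto simp: F''_def)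
  ultimately show "a \<inter> b \<in> cylD G" unfolding cylD_def by blast
qed

lemma sets_path_space: "sets (path_space G) = sigma_sets (inf_paths G) (cyl G ` mor G)"
  unfolding path_space_def by (rule sets_measure_of) (auto simp: cyl_def)

lemma space_path_space: "space (path_space G) = inf_paths G"
  unfolding path_space_def by (rule space_measure_of) (auto simp: cyl_def)

lemma cyl_sets: "l \<in> mor G \<Longrightarrow> cyl G l \<in> sets (path_space G)"
  unfolding sets_path_space by auto

lemma cylD_sets:
  assumes fin: "finite_kgraph G" and F: "F \<subseteq> {l \<in> mor G. deg G l = n}"
  shows "finite F" "(\<Union>v\<in>F. cyl G v) \<in> sets (path_space G)"
proof -
  show fF: "finite F" using fin F unfolding finite_kgraph_def by (meson finite_subset)
  show "(\<Union>v\<in>F. cyl G v) \<in> sets (path_space G)"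
    using fF F by (intro sets.finite_UN) (auto intro: cyl_sets)
qed

lemma sigma_cylD:
  assumes fin: "finite_kgraph G"
  shows "sigma_sets (inf_paths G) (cylD G) = sets (path_space G)"
proof
  have "cylD G \<subseteq> sets (path_space G)"
  proof
    fix a assume "a \<in> cylD G"
    then obtain n F where a: "a = {x \<in> inf_paths G. x zk n \<in> F}" and F: "F \<subseteq> {l \<in> mor G. deg G l = n}"
      unfolding cylD_def by blast
    show "a \<in> sets (path_space G)" using cylD_sets[OF fin F] cylD_eq[OF F] a by simp
  qed
  thus "sigma_sets (inf_paths G) (cylD G) \<subseteq> sets (path_space G)"
    using sets.sigma_sets_subset[of "cylD G" "path_space G"] by (simp add: space_path_space)
  have "cyl G ` mor G \<subseteq> cylD G"
  proof
    fix a assume "a \<in> cyl G ` mor G"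
    then obtain l where l: "l \<in> mor G" "a = cyl G l" by blast
    have "a = {x \<in> inf_paths G. x zk (deg G l) \<in> {l}}" using l by (auto simp: cyl_def)
    moreover have "{l} \<subseteq> {v \<in> mor G. deg G v = deg G l}" using l by auto
    ultimately show "a \<in> cylD G" unfolding cylD_def by blast
  qed
  thus "sets (path_space G) \<subseteq> sigma_sets (inf_paths G) (cylD G)"
    unfolding sets_path_space by (intro sigma_sets_mono) auto
qed

lemma path_induct:
  assumes kg: "is_kgraph G" and fin: "finite_kgraph G" and E: "E \<in> sets (path_space G)"
    and base: "\<And>n F. F \<subseteq> {l \<in> mor G. deg G l = n} \<Longrightarrow> Q (\<Union>v\<in>F. cyl G v)"
    and empty: "Q {}"
    and compl: "\<And>A. A \<in> sets (path_space G) \<Longrightarrow> Q A \<Longrightarrow> Q (inf_paths G - A)"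
    and union: "\<And>A. disjoint_family A \<Longrightarrow> range A \<subseteq> sets (path_space G) \<Longrightarrow> (\<And>i. Q (A i)) \<Longrightarrow> Q (\<Union>i::nat. A i)"
  shows "Q E"
proof -
  have sub: "cylD G \<subseteq> Pow (inf_paths G)" by (auto simp: cylD_def)
  have E': "E \<in> sigma_sets (inf_paths G) (cylD G)" using E sigma_cylD[OF fin] by simp
  show ?thesis
  proof (induction rule: sigma_sets_induct_disjoint[OF cylD_Int_stable[OF kg] sub E'])
    case (1 A)
    then obtain n F where a: "A = {x \<in> inf_paths G. x zk n \<in> F}" and F: "F \<subseteq> {l \<in> mor G. deg G l = n}"
      unfolding cylD_def by blast
    show ?case using base[OF F] cylD_eq[OF F] a by simp
  next
    case 2 show ?case by (rule empty)
  next
    case (3 A) thus ?case using compl sigma_cylD[OF fin] by simp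
  next
    case (4 A) thus ?case using union sigma_cylD[OF fin] by simp
  qed
qed

lemma space_in_cylD:
  "inf_paths G = (\<Union>v\<in>{l \<in> mor G. deg G l = zk}. cyl G v)"
  using cylD_eq[of "{l \<in> mor G. deg G l = zk}" G zk] path_deg0[of _ G zk] by auto

lemma pvm_cylD:
  fixes P :: "(('k \<Rightarrow> nat) \<Rightarrow> ('k \<Rightarrow> nat) \<Rightarrow> 'a) set \<Rightarrow> 'h::complex_inner \<Rightarrow> 'h"
  assumes pv: "pvm (path_space G) P" and fin: "finite_kgraph G" and F: "F \<subseteq> {l \<in> mor G. deg G l = n}"
  shows "P (\<Union>v\<in>F. cyl G v) h = (\<Sum>v\<in>F. P (cyl G v) h)"
proof (rule pvm_finite_union[OF pv cylD_sets(1)[OF fin F]])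
  show "\<And>v. v \<in> F \<Longrightarrow> cyl G v \<in> sets (path_space G)" using F by (auto intro: cyl_sets)
  show "disjoint_family_on (cyl G) F"
    unfolding disjoint_family_on_def using F by (intro ballI impI cyl_disj) auto
qed

lemma has_sum_countable_support:
  fixes f :: "'a \<Rightarrow> 'b::real_normed_vector"
  assumes hs: "(f has_sum s) A"
  shows "countable {x\<in>A. f x \<noteq> 0}"
proof -
  have fin: "finite {x\<in>A. norm (f x) \<ge> 1 / Suc k}" for k
  proof -
    define e :: real where "e = 1 / Suc k"
    have e: "e / 2 > 0" by (simp add: e_def)
    have lim: "((\<lambda>F. sum f F) \<longlongrightarrow> s) (finite_subsets_at_top A)" using hs by (simp add: has_sum_def)
    have "eventually (\<lambda>F. dist (sum f F) s < e / 2) (finite_subsets_at_top A)"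
      by (rule tendstoD[OF lim e])
    hence "\<exists>X. finite X \<and> X \<subseteq> A \<and> (\<forall>Y. finite Y \<and> X \<subseteq> Y \<and> Y \<subseteq> A \<longrightarrow> dist (sum f Y) s < e / 2)"
      by (simp only: eventually_finite_subsets_at_top)
    then obtain X where X: "finite X" "X \<subseteq> A"
      and XP0: "\<forall>Y. finite Y \<and> X \<subseteq> Y \<and> Y \<subseteq> A \<longrightarrow> dist (sum f Y) s < e / 2"
      by (elim exE conjE)
    have XP: "dist (sum f Y) s < e / 2" if "finite Y" "X \<subseteq> Y" "Y \<subseteq> A" for Y
      using XP0 that by blast
    have sub: "{x\<in>A. norm (f x) \<ge> e} \<subseteq> X"
    proof
      fix x assume x: "x \<in> {x\<in>A. norm (f x) \<ge> e}"
      show "x \<in> X"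
      proof (rule ccontr)
        assume nx: "x \<notin> X"
        have d1: "dist (sum f (insert x X)) s < e / 2" using XP[of "insert x X"] X x by auto
        have d2: "dist (sum f X) s < e / 2" using XP[of X] X by auto
        have "sum f (insert x X) = f x + sum f X" using X(1) nx by simp
        hence "norm (f x) = dist (sum f (insert x X)) (sum f X)" by (simp add: dist_norm)
        also have "\<dots> \<le> dist (sum f (insert x X)) s + dist (sum f X) s" by (rule dist_triangle2)
        finally have "norm (f x) < e" using d1 d2 by linarith
        thus False using x by simp
      qed
    qed
    show ?thesis by (rule finite_subset[OF sub[unfolded e_def] X(1)])
  qed
  have "{x\<in>A. f x \<noteq> 0} \<subseteq> (\<Union>k. {x\<in>A. norm (f x) \<ge> 1 / Suc k})"
  proof
    fix x assume x: "x \<in> {x\<in>A. f x \<noteq> 0}"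
    hence pos: "norm (f x) > 0" by simp
    obtain k where "inverse (real (Suc k)) < norm (f x)" using reals_Archimedean[OF pos] by blast
    hence "1 / Suc k \<le> norm (f x)" by (simp add: inverse_eq_divide)
    thus "x \<in> (\<Union>k. {x\<in>A. norm (f x) \<ge> 1 / Suc k})" using x by blast
  qed
  moreover have "countable (\<Union>k. {x\<in>A. norm (f x) \<ge> 1 / Suc k})"
    by (rule countable_UN) (auto intro: countable_finite[OF fin] simp del: of_nat_Suc)
  ultimately show ?thesis by (rule countable_subset)
qed

lemma bl_cinner: "bounded_linear (\<lambda>y. cinner (v::'a::complex_inner) y)"
proof (rule bounded_linear_intro[of _ "norm v"])
  show "cinner v (x + y) = cinner v x + cinner v y" for x y by (rule cinner_add_right)
  show "cinner v (r *\<^sub>R x) = r *\<^sub>R cinner v x" for r x by (simp add: cinner_scaleR_right scaleR_conv_of_real)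
  show "norm (cinner v x) \<le> norm x * norm v" for x using cauchy_schwarz[of v x] by (simp add: mult.commute)
qed

lemma bl_cscale_left: "bounded_linear (\<lambda>c::complex. cscale c (v::'a::complex_inner))"
proof (rule bounded_linear_intro[of _ "norm v"])
  show "cscale (x + y) v = cscale x v + cscale y v" for x y by (rule cscale_add_left)
  show "cscale (r *\<^sub>R x) v = r *\<^sub>R cscale x v" for r x
    by (simp add: scaleR_cscale cscale_cscale scaleR_conv_of_real)
  show "norm (cscale x v) \<le> norm x * norm v" for x by (simp add: norm_cscale)
qed

lemma bl_cscale_right: "bounded_linear (\<lambda>x::'a::complex_inner. cscale c x)"
proof (rule bounded_linear_intro[of _ "cmod c"])
  show "cscale c (x + y) = cscale c x + cscale c y" for x y by (rule cscale_add_right)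
  show "cscale c (r *\<^sub>R x) = r *\<^sub>R cscale c x" for r x
    by (simp add: scaleR_cscale cscale_cscale mult.commute)
  show "norm (cscale c x) \<le> norm x * cmod c" for x by (simp add: norm_cscale mult.commute)
qed

lemma line_closed: "closed (range (\<lambda>c. cscale c (v::'a::complex_inner)))"
proof -
  define g where "g y = cscale (cinner v y / cinner v v) v" for y
  have "bounded_linear g"
    unfolding g_def
    using bounded_linear_compose[OF bl_cscale_left[of v] bounded_linear_compose[OF bounded_linear_divide[of "cinner v v"] bl_cinner[of v]]]
    by (simp add: o_def)
  hence cg: "continuous_on UNIV g" by (simp add: linear_continuous_on)
  have "range (\<lambda>c. cscale c v) = {y. g y = id y}"
  proof (intro equalityI subsetI)
    fix y assume "y \<in> range (\<lambda>c. cscale c v)"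
    then obtain c where y: "y = cscale c v" by blast
    show "y \<in> {y. g y = id y}"
    proof (cases "v = 0")
      case True thus ?thesis by (simp add: y g_def)
    next
      case False
      hence "cinner v v \<noteq> 0" by (simp add: cinner_self_eq_zero)
      thus ?thesis by (simp add: y g_def cinner_cscale_right)
    qed
  next
    fix y assume "y \<in> {y. g y = id y}"
    hence "y = cscale (cinner v y / cinner v v) v" by (simp add: g_def)
    thus "y \<in> range (\<lambda>c. cscale c v)" by blast
  qed
  moreover have "closed {y. g y = id y}" by (rule closed_Collect_eq[OF cg]) (simp add: continuous_on_id)
  ultimately show ?thesis by simp
qed

lemma line_sum:
  assumes "\<And>a. a \<in> F \<Longrightarrow> f a \<in> range (\<lambda>c. cscale c (v::'a::complex_inner))"
  shows "sum f F \<in> range (\<lambda>c. cscale c v)"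
  using assms
proof (induction F rule: infinite_finite_induct)
  case (infinite A) thus ?case by (auto intro!: range_eqI[of _ _ 0])
next
  case empty thus ?case by (auto intro!: range_eqI[of _ _ 0])
next
  case (insert a F)
  then obtain c d where "f a = cscale c v" "sum f F = cscale d v" by blast
  thus ?case using insert by (auto intro!: range_eqI[of _ _ "c + d"] simp: cscale_add_left)
qed

lemma line_cscale: "w \<in> range (\<lambda>c. cscale c (v::'a::complex_inner)) \<Longrightarrow> cscale d w \<in> range (\<lambda>c. cscale c v)"
  by (auto simp: cscale_cscale)

lemma closure_add_closed:
  assumes V: "\<And>x y. x \<in> V \<Longrightarrow> y \<in> V \<Longrightarrow> x + y \<in> V"
    and x: "x \<in> closure V" and y: "y \<in> closure (V::'a::real_normed_vector set)"
  shows "x + y \<in> closure V"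
proof -
  obtain f where f: "\<And>n. f n \<in> V" "f \<longlonglongrightarrow> x" using x unfolding closure_sequential by blast
  obtain g where g: "\<And>n. g n \<in> V" "g \<longlonglongrightarrow> y" using y unfolding closure_sequential by blast
  have A: "\<forall>n. f n + g n \<in> V" using f g V by blast
  have B: "(\<lambda>n. f n + g n) \<longlonglongrightarrow> x + y" using f g by (intro tendsto_intros)
  show ?thesis unfolding closure_sequential by (rule exI[of _ "\<lambda>n. f n + g n"]) (use A B in blast)
qed

lemma closure_cscale_closed:
  assumes V: "\<And>x. x \<in> V \<Longrightarrow> cscale c x \<in> V"
    and x: "x \<in> closure (V::'a::complex_inner set)"
  shows "cscale c x \<in> closure V"
proof -
  have "(\<lambda>x. cscale c x) ` closure V \<subseteq> closure V"
    by (rule image_closure_subset)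
      (use V closure_subset in \<open>auto intro!: linear_continuous_on bl_cscale_right\<close>)
  thus ?thesis using x by blast
qed

lemma cspan_gen: "a \<in> S \<Longrightarrow> a \<in> cspan S"
  unfolding cspan_def by (auto intro!: exI[of _ "{a}"] exI[of _ "\<lambda>_. 1"] simp: cscale_one)

lemma cspan_zero: "0 \<in> cspan S"
  unfolding cspan_def by (auto intro!: exI[of _ "{}"])

lemma cspan_cscale:
  assumes "x \<in> cspan S" shows "cscale d x \<in> cspan S"
proof -
  obtain F c where x: "x = (\<Sum>a\<in>F. cscale (c a) a)" "finite F" "F \<subseteq> S"
    using assms unfolding cspan_def by blast
  have eq: "cscale d x = (\<Sum>a\<in>F. cscale (d * c a) a)" by (simp add: x cscale_sum cscale_cscale)
  show ?thesis unfolding cspan_def mem_Collect_eq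
    by (rule exI[of _ F], rule exI[of _ "\<lambda>a. d * c a"]) (use eq x in simp)
qed

lemma cspan_add:
  assumes "x \<in> cspan S" "y \<in> cspan S" shows "x + y \<in> cspan S"
proof -
  obtain F1 c1 where x: "x = (\<Sum>a\<in>F1. cscale (c1 a) a)" "finite F1" "F1 \<subseteq> S"
    using assms(1) unfolding cspan_def by blast
  obtain F2 c2 where y: "y = (\<Sum>a\<in>F2. cscale (c2 a) a)" "finite F2" "F2 \<subseteq> S"
    using assms(2) unfolding cspan_def by blast
  define d1 where "d1 a = (if a \<in> F1 then c1 a else 0)" for a
  define d2 where "d2 a = (if a \<in> F2 then c2 a else 0)" for a
  have fin: "finite (F1 \<union> F2)" using x y by simp
  have e1: "(\<Sum>a\<in>F1 \<union> F2. cscale (d1 a) a) = x"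
  proof -
    have "(\<Sum>a\<in>F1. cscale (d1 a) a) = (\<Sum>a\<in>F1 \<union> F2. cscale (d1 a) a)"
      by (rule sum.mono_neutral_left[OF fin]) (auto simp: d1_def)
    moreover have "(\<Sum>a\<in>F1. cscale (d1 a) a) = x" using x by (simp add: d1_def)
    ultimately show ?thesis by simp
  qed
  have e2: "(\<Sum>a\<in>F1 \<union> F2. cscale (d2 a) a) = y"
  proof -
    have "(\<Sum>a\<in>F2. cscale (d2 a) a) = (\<Sum>a\<in>F1 \<union> F2. cscale (d2 a) a)"
      by (rule sum.mono_neutral_left[OF fin]) (auto simp: d2_def)
    moreover have "(\<Sum>a\<in>F2. cscale (d2 a) a) = y" using y by (simp add: d2_def)
    ultimately show ?thesis by simp
  qed
  have eq: "x + y = (\<Sum>a\<in>F1 \<union> F2. cscale (d1 a + d2 a) a)"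
    by (simp add: cscale_add_left sum.distrib e1 e2)
  show ?thesis unfolding cspan_def mem_Collect_eq
    by (rule exI[of _ "F1 \<union> F2"], rule exI[of _ "\<lambda>a. d1 a + d2 a"]) (use fin x(3) y(3) eq in simp)
qed

lemma cspan_sum: "(\<And>a. a \<in> F \<Longrightarrow> f a \<in> cspan S) \<Longrightarrow> sum f F \<in> cspan S"
  by (induction F rule: infinite_finite_induct) (auto intro: cspan_add cspan_zero)

lemma ccl_add: "x \<in> closure (cspan S) \<Longrightarrow> y \<in> closure (cspan S) \<Longrightarrow> x + y \<in> closure (cspan S)"
  by (rule closure_add_closed) (auto intro: cspan_add)

lemma ccl_cscale: "x \<in> closure (cspan S) \<Longrightarrow> cscale c x \<in> closure (cspan S)"
  by (rule closure_cscale_closed) (auto intro: cspan_cscale)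

lemma ccl_zero: "0 \<in> closure (cspan S)"
  using cspan_zero closure_subset by blast

lemma ccl_gen: "a \<in> S \<Longrightarrow> a \<in> closure (cspan S)"
  using cspan_gen closure_subset by blast

lemma ccl_sum: "(\<And>a. a \<in> F \<Longrightarrow> f a \<in> closure (cspan S)) \<Longrightarrow> sum f F \<in> closure (cspan S)"
  by (induction F rule: infinite_finite_induct) (auto intro: ccl_add ccl_zero)

lemma ccl_diff: "x \<in> closure (cspan S) \<Longrightarrow> y \<in> closure (cspan S) \<Longrightarrow> x - y \<in> closure (cspan S)"
  using ccl_add[of x S "cscale (-1) y"] ccl_cscale[of y S "-1"] by (simp add: cscale_minus_one)

lemma ccl_scaleR: "x \<in> closure (cspan S) \<Longrightarrow> scaleR r x \<in> closure (cspan S)"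
  by (simp add: scaleR_cscale ccl_cscale)

theorem mainTheorem17:
  fixes G :: "('a, 'k::finite) kgraph"
    and t :: "'a \<Rightarrow> 'h::chilbert_space \<Rightarrow> 'h"
    and P :: "(('k \<Rightarrow> nat) \<Rightarrow> ('k \<Rightarrow> nat) \<Rightarrow> 'a) set \<Rightarrow> 'h \<Rightarrow> 'h"
  assumes "is_kgraph G" and "finite_kgraph G" and "no_sources G"
    and "separable_type TYPE('h)"
    and "ck_family G t"
    and "\<forall>l\<in>mor G. t l \<circ> adj (t l) \<noteq> (\<lambda>_. 0)"
    and "pvm_of_rep G t P"
    and "purely_atomic_pvm (path_space G) P"
  shows "(monic G t \<longleftrightarrow> (\<forall>x. is_atom (path_space G) P x \<longrightarrow> rank_one (P {x})))
    \<and> (monic G t \<longrightarrow> (\<forall>\<xi> \<mu>. cyclic_vector G t \<xi> \<longrightarrow> is_mu_pi G t \<xi> \<mu> \<longrightarrow>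
                                 purely_atomic_measure \<mu>))"
proof -
  note kg = assms(1) and fin = assms(2) and sep = assms(4) and tnz = assms(6)
    and rep = assms(7) and pa = assms(8)
  have pv: "pvm (path_space G) P" using rep by (simp add: pvm_of_rep_def)
  have tP: "t l (adj (t l) h) = P (cyl G l) h" if "l \<in> mor G" for l h
    using rep that by (simp add: pvm_of_rep_def)
  have sp: "space (path_space G) = inf_paths G" by (rule space_path_space)
  have gens: "{t l (adj (t l) \<xi>) | l. l \<in> mor G} = {P (cyl G l) \<xi> | l. l \<in> mor G}" for \<xi>
    by (rule Collect_cong) (metis tP)

  have rangeA: "range (P {x}) \<subseteq> range (\<lambda>c. cscale c (P {x} \<xi>))"
    if cyc: "cyclic_vector G t \<xi>" and sx: "{x} \<in> sets (path_space G)" for x \<xi>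
  proof -
    let ?L = "range (\<lambda>c. cscale c (P {x} \<xi>))"
    have bcl: "bounded_clinear (P {x})" using pvm_bcl[OF pv sx] .
    have gen: "P {x} (P (cyl G l) \<xi>) \<in> ?L" if l: "l \<in> mor G" for l
    proof -
      have cs: "cyl G l \<in> sets (path_space G)" using l by (rule cyl_sets)
      have e: "P {x} (P (cyl G l) \<xi>) = P ({x} \<inter> cyl G l) \<xi>" by (rule pvm_inter[OF pv sx cs])
      show ?thesis
      proof (cases "x \<in> cyl G l")
        case True
        hence "{x} \<inter> cyl G l = {x}" by auto
        thus ?thesis using e by (auto intro: range_eqI[of _ _ 1] simp: cscale_one)
      next
        case False
        hence "{x} \<inter> cyl G l = {}" by auto
        thus ?thesis using e pvm_empty[OF pv] by (auto intro: range_eqI[of _ _ 0])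
      qed
    qed
    have "P {x} ` cspan {t l (adj (t l) \<xi>) | l. l \<in> mor G} \<subseteq> ?L"
    proof
      fix w assume "w \<in> P {x} ` cspan {t l (adj (t l) \<xi>) | l. l \<in> mor G}"
      then obtain F c where w: "w = P {x} (\<Sum>a\<in>F. cscale (c a) a)"
        and F: "finite F" "F \<subseteq> {t l (adj (t l) \<xi>) | l. l \<in> mor G}"
        unfolding cspan_def by blast
      have w2: "w = (\<Sum>a\<in>F. cscale (c a) (P {x} a))"
        using w by (simp add: bclin_sum[OF bcl] bclin_cscale[OF bcl])
      have "P {x} a \<in> ?L" if "a \<in> F" for a
      proof -
        from that F obtain l where "l \<in> mor G" "a = t l (adj (t l) \<xi>)" by blast
        thus ?thesis using gen tP by simp
      qed
      thus "w \<in> ?L" unfolding w2 by (intro line_sum line_cscale)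
    qed
    hence "P {x} ` closure (cspan {t l (adj (t l) \<xi>) | l. l \<in> mor G}) \<subseteq> ?L"
      by (intro image_closure_subset) (auto intro!: linear_continuous_on bclin_linear[OF bcl] line_closed)
    thus ?thesis using cyc unfolding cyclic_vector_def by simp
  qed

  have atom_nz: "P {x} \<xi> \<noteq> 0"
    if cyc: "cyclic_vector G t \<xi>" and sx: "{x} \<in> sets (path_space G)" and nz: "P {x} \<noteq> (\<lambda>_. 0)" for x \<xi>
  proof
    assume "P {x} \<xi> = 0"
    hence "\<And>h. P {x} h = 0" using rangeA[OF cyc sx] by auto
    thus False using nz by auto
  qed

  have A1: "\<forall>x. is_atom (path_space G) P x \<longrightarrow> rank_one (P {x})" if mon: "monic G t"
  proof (intro allI impI)
    fix x assume at: "is_atom (path_space G) P x"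
    hence sx: "{x} \<in> sets (path_space G)" and nz: "P {x} \<noteq> (\<lambda>_. 0)" unfolding is_atom_def by auto
    from mon obtain \<xi> where cyc: "cyclic_vector G t \<xi>" unfolding monic_def by blast
    have bcl: "bounded_clinear (P {x})" using pvm_bcl[OF pv sx] .
    have "range (P {x}) = range (\<lambda>c. cscale c (P {x} \<xi>))"
    proof
      show "range (P {x}) \<subseteq> range (\<lambda>c. cscale c (P {x} \<xi>))" by (rule rangeA[OF cyc sx])
      show "range (\<lambda>c. cscale c (P {x} \<xi>)) \<subseteq> range (P {x})"
      proof
        fix w assume "w \<in> range (\<lambda>c. cscale c (P {x} \<xi>))"
        then obtain c where "w = cscale c (P {x} \<xi>)" by blast
        hence "w = P {x} (cscale c \<xi>)" by (simp add: bclin_cscale[OF bcl])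
        thus "w \<in> range (P {x})" by blast
      qed
    qed
    thus "rank_one (P {x})" unfolding rank_one_def using atom_nz[OF cyc sx nz] by blast
  qed

  have C1: "purely_atomic_measure \<mu>" if cyc: "cyclic_vector G t \<xi>" and mu: "is_mu_pi G t \<xi> \<mu>" for \<xi> \<mu>
  proof -
    have setsmu: "sets \<mu> = sets (path_space G)" using mu by (simp add: is_mu_pi_def)
    have emc: "emeasure \<mu> (cyl G l) = ennreal (Re (cinner \<xi> (P (cyl G l) \<xi>)))" if "l \<in> mor G" for l
      using mu that tP by (simp add: is_mu_pi_def)
    have spmu: "space \<mu> = inf_paths G" using sets_eq_imp_space_eq[OF setsmu] sp by simp
    define r where "r E = Re (cinner \<xi> (P E \<xi>))" for E
    have rsq: "r E = (norm (P E \<xi>))\<^sup>2" if "E \<in> sets (path_space G)" for E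
      using proj_inner_self[OF pvm_proj[OF pv that], of \<xi>] by (simp add: r_def)
    have rnn: "r E \<ge> 0" if "E \<in> sets (path_space G)" for E using rsq[OF that] by simp
    have base: "emeasure \<mu> (\<Union>v\<in>F. cyl G v) = ennreal (r (\<Union>v\<in>F. cyl G v))"
      if F: "F \<subseteq> {l \<in> mor G. deg G l = n}" for n F
    proof -
      have fF: "finite F" by (rule cylD_sets(1)[OF fin F])
      have dj: "disjoint_family_on (cyl G) F"
        unfolding disjoint_family_on_def using F by (intro ballI impI cyl_disj) auto
      have cs: "cyl G ` F \<subseteq> sets \<mu>" using F by (auto simp: setsmu intro: cyl_sets)
      have "emeasure \<mu> (\<Union>v\<in>F. cyl G v) = (\<Sum>v\<in>F. emeasure \<mu> (cyl G v))"
        by (rule sum_emeasure[OF cs dj fF, symmetric])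
      also have "\<dots> = (\<Sum>v\<in>F. ennreal (r (cyl G v)))"
        using F emc by (intro sum.cong) (auto simp: r_def)
      also have "\<dots> = ennreal (\<Sum>v\<in>F. r (cyl G v))"
        using F by (intro sum_ennreal rnn) (auto intro: cyl_sets)
      also have "(\<Sum>v\<in>F. r (cyl G v)) = r (\<Union>v\<in>F. cyl G v)"
        by (simp add: r_def pvm_cylD[OF pv fin F] cinner_sum_right)
      finally show ?thesis .
    qed
    have S0: "emeasure \<mu> (inf_paths G) = ennreal (r (inf_paths G))"
      using base[of "{l \<in> mor G. deg G l = zk}" zk] space_in_cylD[of G] by simp
    have S0s: "inf_paths G \<in> sets (path_space G)" using sets.top[of "path_space G"] sp by simp
    have blr: "bounded_linear (\<lambda>y. Re (cinner \<xi> y))"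
      using bounded_linear_compose[OF bounded_linear_Re bl_cinner[of \<xi>]] by (simp add: o_def)
    have claim: "emeasure \<mu> E = ennreal (r E)" if E: "E \<in> sets (path_space G)" for E
    proof (rule path_induct[OF kg fin E, where Q = "\<lambda>E. emeasure \<mu> E = ennreal (r E)"])
      fix n F assume F: "F \<subseteq> {l \<in> mor G. deg G l = n}"
      show "emeasure \<mu> (\<Union>v\<in>F. cyl G v) = ennreal (r (\<Union>v\<in>F. cyl G v))" by (rule base[OF F])
    next
      show "emeasure \<mu> {} = ennreal (r {})" by (simp add: r_def pvm_empty[OF pv])
    next
      fix A assume A: "A \<in> sets (path_space G)" and IH: "emeasure \<mu> A = ennreal (r A)"
      have As: "A \<in> sets \<mu>" using A setsmu by simp
      have Asub: "A \<subseteq> inf_paths G" using sets.sets_into_space[OF A] sp by simp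
      have S0mu: "inf_paths G \<in> sets \<mu>" using S0s setsmu by simp
      have "emeasure \<mu> (inf_paths G - A) = emeasure \<mu> (inf_paths G) - emeasure \<mu> A"
        by (rule emeasure_Diff) (use IH As Asub S0mu in auto)
      also have "\<dots> = ennreal (r (inf_paths G) - r A)"
        using S0 IH rnn[OF A] by (simp add: ennreal_minus)
      also have "r (inf_paths G) - r A = r (inf_paths G - A)"
        using pvm_compl[OF pv A, of \<xi>] pvm_space[OF pv, of \<xi>]
        by (simp add: r_def sp cinner_diff_right)
      finally show "emeasure \<mu> (inf_paths G - A) = ennreal (r (inf_paths G - A))" .
    next
      fix A :: "nat \<Rightarrow> _" assume dj: "disjoint_family A" and rA: "range A \<subseteq> sets (path_space G)"
        and IH: "\<And>i. emeasure \<mu> (A i) = ennreal (r (A i))"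
      have rs: "range A \<subseteq> sets \<mu>" using rA setsmu by simp
      have sm: "(\<lambda>i. r (A i)) sums r (\<Union>i. A i)"
        unfolding r_def by (rule bounded_linear.sums[OF blr pvm_sums[OF pv rA dj]])
      have "emeasure \<mu> (\<Union>i. A i) = (\<Sum>i. emeasure \<mu> (A i))"
        by (rule suminf_emeasure[OF rs dj, symmetric])
      also have "\<dots> = (\<Sum>i. ennreal (r (A i)))" using IH by simp
      also have "\<dots> = ennreal (\<Sum>i. r (A i))"
        using rA by (intro suminf_ennreal2 rnn sums_summable[OF sm]) auto
      also have "(\<Sum>i. r (A i)) = r (\<Union>i. A i)" using sm by (rule sums_unique[symmetric])
      finally show "emeasure \<mu> (\<Union>i. A i) = ennreal (r (\<Union>i. A i))" .
    qed
    obtain \<Omega> where \<Omega>: "\<Omega> \<in> sets (path_space G)" "P (space (path_space G) - \<Omega>) = (\<lambda>_. 0)"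
      "\<forall>\<omega>\<in>\<Omega>. {\<omega>} \<in> sets (path_space G) \<and> P {\<omega>} \<noteq> (\<lambda>_. 0)"
      using pa unfolding purely_atomic_pvm_def by blast
    show ?thesis unfolding purely_atomic_measure_def
    proof (intro bexI conjI ballI)
      show "\<Omega> \<in> sets \<mu>" using \<Omega>(1) setsmu by simp
      have "space \<mu> - \<Omega> \<in> sets (path_space G)" using \<Omega>(1) spmu sp
        by (metis sets.compl_sets)
      hence "emeasure \<mu> (space \<mu> - \<Omega>) = ennreal (r (space \<mu> - \<Omega>))" by (rule claim)
      also have "r (space \<mu> - \<Omega>) = 0" using \<Omega>(2) spmu sp by (simp add: r_def)
      finally show "emeasure \<mu> (space \<mu> - \<Omega>) = 0" by simp
      fix \<omega> assume w: "\<omega> \<in> \<Omega>"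
      have sw: "{\<omega>} \<in> sets (path_space G)" "P {\<omega>} \<noteq> (\<lambda>_. 0)" using \<Omega>(3) w by auto
      show "{\<omega>} \<in> sets \<mu>" using sw setsmu by simp
      have "P {\<omega>} \<xi> \<noteq> 0" by (rule atom_nz[OF cyc sw])
      hence "r {\<omega>} > 0" using rsq[OF sw(1)] by simp
      thus "emeasure \<mu> {\<omega>} \<noteq> 0" using claim[OF sw(1)] by simp
    qed
  qed

  have B1: "monic G t" if ra: "\<forall>x. is_atom (path_space G) P x \<longrightarrow> rank_one (P {x})"
  proof -
    obtain \<Omega> where \<Omega>s: "\<Omega> \<in> sets (path_space G)"
      and \<Omega>w: "\<And>\<omega>. \<omega> \<in> \<Omega> \<Longrightarrow> {\<omega>} \<in> sets (path_space G) \<and> P {\<omega>} \<noteq> (\<lambda>_. 0)"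
      and hs: "\<And>h. ((\<lambda>\<omega>. P {\<omega>} h) has_sum h) \<Omega>"
      using pa unfolding purely_atomic_pvm_def by blast
    have rk: "rank_one (P {\<omega>})" if w: "\<omega> \<in> \<Omega>" for \<omega>
    proof -
      have "\<omega> \<in> space (path_space G)" using sets.sets_into_space[OF \<Omega>s] w by blast
      hence "is_atom (path_space G) P \<omega>" using \<Omega>w[OF w] by (simp add: is_atom_def)
      thus ?thesis using ra by blast
    qed
    have "\<exists>u. norm u = 1 \<and> P {\<omega>} u = u \<and> (\<forall>h. \<exists>c. P {\<omega>} h = cscale c u)" if w: "\<omega> \<in> \<Omega>" for \<omega>
    proof -
      obtain v where v: "v \<noteq> 0" "range (P {\<omega>}) = range (\<lambda>c. cscale c v)"
        using rk[OF w] unfolding rank_one_def by blast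
      define u where "u = cscale (of_real (1 / norm v)) v"
      have nu: "norm u = 1" using v(1) by (simp add: u_def norm_cscale norm_divide)
      have "u \<in> range (P {\<omega>})" using v(2) by (auto simp: u_def)
      then obtain h0 where "u = P {\<omega>} h0" by blast
      hence pu: "P {\<omega>} u = u" using pvm_idem[OF pv] \<Omega>w[OF w] by simp
      have "\<exists>c. P {\<omega>} h = cscale c u" for h
      proof -
        have "P {\<omega>} h \<in> range (\<lambda>c. cscale c v)" using v(2) by blast
        then obtain c where c: "P {\<omega>} h = cscale c v" by blast
        have "cscale (c * of_real (norm v)) u = cscale c v"
          using v(1) by (simp add: u_def cscale_cscale)
        thus ?thesis using c by metis
      qed
      thus ?thesis using nu pu by blast
    qed
    then obtain u where u1: "\<And>\<omega>. \<omega> \<in> \<Omega> \<Longrightarrow> norm (u \<omega>) = 1"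
      and u2: "\<And>\<omega>. \<omega> \<in> \<Omega> \<Longrightarrow> P {\<omega>} (u \<omega>) = u \<omega>"
      and u3: "\<And>\<omega> h. \<omega> \<in> \<Omega> \<Longrightarrow> \<exists>c. P {\<omega>} h = cscale c (u \<omega>)"
      by metis
    have cnt: "countable \<Omega>"
    proof -
      obtain Dn :: "'h set" where Dn: "countable Dn" "closure Dn = UNIV"
        using sep unfolding separable_type_def by blast
      have "\<exists>d\<in>Dn. P {\<omega>} d \<noteq> 0" if w: "\<omega> \<in> \<Omega>" for \<omega>
      proof -
        have bcl: "bounded_clinear (P {\<omega>})" using pvm_bcl[OF pv] \<Omega>w[OF w] by blast
        let ?U = "- {h. P {\<omega>} h = (\<lambda>_. 0) h}"
        have "closed {h. P {\<omega>} h = (\<lambda>_. 0) h}"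
          by (rule closed_Collect_eq) (auto intro: linear_continuous_on bclin_linear[OF bcl])
        hence oU: "open ?U" by (simp add: open_Compl)
        have "?U \<noteq> {}" using \<Omega>w[OF w] by auto
        hence "?U \<inter> closure Dn \<noteq> {}" using Dn(2) by simp
        hence "?U \<inter> Dn \<noteq> {}" using open_Int_closure_eq_empty[OF oU, of Dn] by simp
        thus ?thesis by auto
      qed
      hence "\<Omega> \<subseteq> (\<Union>d\<in>Dn. {\<omega>\<in>\<Omega>. P {\<omega>} d \<noteq> 0})" by blast
      moreover have "countable (\<Union>d\<in>Dn. {\<omega>\<in>\<Omega>. P {\<omega>} d \<noteq> 0})"
        using Dn(1) by (intro countable_UN has_sum_countable_support[OF hs]) auto
      ultimately show ?thesis by (rule countable_subset)
    qed
    define e where "e = to_nat_on \<Omega>"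
    have einj: "inj_on e \<Omega>" unfolding e_def by (rule inj_on_to_nat_on[OF cnt])
    have einv: "\<And>\<omega>. \<omega> \<in> \<Omega> \<Longrightarrow> from_nat_into \<Omega> (e \<omega>) = \<omega>" using cnt by (simp add: e_def)
    define f where "f n = (if n \<in> e ` \<Omega> then scaleR ((1/2)^n) (u (from_nat_into \<Omega> n)) else 0)" for n
    have fn: "norm (f n) \<le> (1/2)^n" for n
    proof (cases "n \<in> e ` \<Omega>")
      case True
      then obtain \<omega> where "\<omega> \<in> \<Omega>" "n = e \<omega>" by blast
      thus ?thesis by (simp add: f_def einv u1)
    next
      case False thus ?thesis by (simp add: f_def)
    qed
    have sf: "summable f"
      by (rule summable_comparison_test[OF _ summable_geometric[of "1/2::real"]]) (use fn in auto)
    define \<xi> where "\<xi> = suminf f"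
    have P\<xi>: "P {\<omega>} \<xi> = scaleR ((1/2)^(e \<omega>)) (u \<omega>)" if w: "\<omega> \<in> \<Omega>" for \<omega>
    proof -
      have sw: "{\<omega>} \<in> sets (path_space G)" using \<Omega>w[OF w] by blast
      have bcl: "bounded_clinear (P {\<omega>})" using pvm_bcl[OF pv sw] .
      have bl: "bounded_linear (P {\<omega>})" by (rule bclin_linear[OF bcl])
      have pf: "P {\<omega>} (f n) = (if n = e \<omega> then f n else 0)" for n
      proof (cases "n \<in> e ` \<Omega>")
        case True
        then obtain \<omega>' where w': "\<omega>' \<in> \<Omega>" "n = e \<omega>'" by blast
        have fe: "f n = scaleR ((1/2)^n) (u \<omega>')" using True w' by (simp add: f_def einv)
        show ?thesis
        proof (cases "\<omega>' = \<omega>")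
          case True
          thus ?thesis using fe w' u2[OF w] by (simp add: scaleR_cscale bclin_cscale[OF bcl])
        next
          case False
          have sw': "{\<omega>'} \<in> sets (path_space G)" using \<Omega>w[OF w'(1)] by blast
          have "P {\<omega>} (u \<omega>') = P {\<omega>} (P {\<omega>'} (u \<omega>'))" using u2[OF w'(1)] by simp
          also have "\<dots> = P ({\<omega>} \<inter> {\<omega>'}) (u \<omega>')" by (rule pvm_inter[OF pv sw sw'])
          also have "\<dots> = 0" using False by (simp add: pvm_empty[OF pv])
          finally have z: "P {\<omega>} (u \<omega>') = 0" .
          have "n \<noteq> e \<omega>" using False w' w einj by (auto dest: inj_onD)
          thus ?thesis using fe z by (simp add: scaleR_cscale bclin_cscale[OF bcl])
        qed
      next
        case False
        hence "n \<noteq> e \<omega>" using w by blast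
        thus ?thesis using False by (simp add: f_def bclin_zero[OF bcl])
      qed
      have "P {\<omega>} \<xi> = (\<Sum>n. P {\<omega>} (f n))" unfolding \<xi>_def by (rule bounded_linear.suminf[OF bl sf])
      also have "\<dots> = (\<Sum>n. if n = e \<omega> then f n else 0)" by (simp add: pf)
      also have "\<dots> = f (e \<omega>)" by (rule sums_unique[symmetric, OF sums_single])
      also have "\<dots> = scaleR ((1/2)^(e \<omega>)) (u \<omega>)" using w by (auto simp: f_def einv)
      finally show ?thesis .
    qed
    define S where "S = closure (cspan {P (cyl G l) \<xi> | l. l \<in> mor G})"
    have baseS: "P (\<Union>v\<in>F. cyl G v) \<xi> \<in> S" if F: "F \<subseteq> {l \<in> mor G. deg G l = n}" for n F
      unfolding S_def pvm_cylD[OF pv fin F] using F by (intro ccl_sum ccl_gen) auto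
    have \<xi>S: "\<xi> \<in> S"
      using baseS[of "{l \<in> mor G. deg G l = zk}" zk] space_in_cylD[of G] pvm_space[OF pv, of \<xi>] sp by simp
    have claim1: "P E \<xi> \<in> S" if E: "E \<in> sets (path_space G)" for E
    proof (rule path_induct[OF kg fin E, where Q = "\<lambda>E. P E \<xi> \<in> S"])
      fix n F assume F: "F \<subseteq> {l \<in> mor G. deg G l = n}"
      show "P (\<Union>v\<in>F. cyl G v) \<xi> \<in> S" by (rule baseS[OF F])
    next
      show "P {} \<xi> \<in> S" by (simp add: pvm_empty[OF pv] S_def ccl_zero)
    next
      fix A assume A: "A \<in> sets (path_space G)" and IH: "P A \<xi> \<in> S"
      show "P (inf_paths G - A) \<xi> \<in> S"
        using pvm_compl[OF pv A, of \<xi>] sp \<xi>S IH by (simp add: S_def ccl_diff)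
    next
      fix A :: "nat \<Rightarrow> _" assume dj: "disjoint_family A" and rA: "range A \<subseteq> sets (path_space G)"
        and IH: "\<And>i. P (A i) \<xi> \<in> S"
      have sm: "(\<lambda>i. P (A i) \<xi>) sums P (\<Union>i. A i) \<xi>" by (rule pvm_sums[OF pv rA dj])
      hence lim: "(\<lambda>n. \<Sum>i<n. P (A i) \<xi>) \<longlonglongrightarrow> P (\<Union>i. A i) \<xi>" by (simp add: sums_def)
      have mem: "\<And>n. (\<Sum>i<n. P (A i) \<xi>) \<in> S" using IH unfolding S_def by (intro ccl_sum) auto
      show "P (\<Union>i. A i) \<xi> \<in> S" by (rule closed_sequentially[OF _ mem lim]) (simp add: S_def)
    qed
    have claim2: "h \<in> S" for h
    proof -
      have memb: "P {\<omega>} h \<in> S" if w: "\<omega> \<in> \<Omega>" for \<omega>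
      proof -
        obtain c where c: "P {\<omega>} h = cscale c (u \<omega>)" using u3[OF w] by blast
        have "P {\<omega>} \<xi> \<in> S" using claim1 \<Omega>w[OF w] by blast
        hence "scaleR (2^(e \<omega>)) (P {\<omega>} \<xi>) \<in> S" by (simp add: S_def ccl_scaleR)
        moreover have "scaleR (2^(e \<omega>)) (P {\<omega>} \<xi>) = u \<omega>"
          using P\<xi>[OF w] by (simp add: power_mult_distrib[symmetric])
        ultimately have "u \<omega> \<in> S" by simp
        thus ?thesis unfolding c by (simp add: S_def ccl_cscale)
      qed
      have lim: "((\<lambda>F. \<Sum>\<omega>\<in>F. P {\<omega>} h) \<longlongrightarrow> h) (finite_subsets_at_top \<Omega>)"
        using hs[of h] by (simp add: has_sum_def)
      have ev: "eventually (\<lambda>F. (\<Sum>\<omega>\<in>F. P {\<omega>} h) \<in> S) (finite_subsets_at_top \<Omega>)"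
        unfolding eventually_finite_subsets_at_top
        by (rule exI[of _ "{}"]) (use memb in \<open>auto simp: S_def intro!: ccl_sum\<close>)
      show ?thesis
        by (rule Lim_in_closed_set[OF _ ev _ lim]) (auto simp: S_def)
    qed
    have "cyclic_vector G t \<xi>"
      unfolding cyclic_vector_def gens using claim2 by (auto simp: S_def)
    moreover have "\<forall>l\<in>mor G. t l \<noteq> (\<lambda>_. 0)"
    proof
      fix l assume "l \<in> mor G"
      thus "t l \<noteq> (\<lambda>_. 0)" using tnz by (auto simp: o_def)
    qed
    ultimately show ?thesis unfolding monic_def by blast
  qed

  show ?thesis using A1 B1 C1 by blast
qed

end
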